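(* Let $T=T_\lambda$ ($\lambda\in(1,2)$) be a tent map whose critical point $c$ has period $m\ge 3$, and let $K$ be its kneading sequence. (1) If for some $N\in\mathbb N$ a word $\mathbf s\in\{0,1\}^N$ is not the initial $N$-segment of $\mathcal I(x)$ for any $x\in[0,T(c)]$, then there is a segment (block of consecutive symbols) $\mathbf r$ of $\mathbf s$ with length $j\le m$ such that $\mathbf r\succ K|_j$. (2) If $\mathbf t\in\{0,1\}^{\mathbb N}$ satisfies $\sigma^k(\mathbf t)\succ K$ for some $k\ge 0$, then there is a segment $\mathbf r$ of $\mathbf t$ with length $j\le m$ such that $\mathbf r\succ K|_j$.
   Context: For $\lambda\in(1,2]$ the tent map $T_\lambda:[0,1]\to[0,1]$ is $T_\lambda(x)=\lambda x$ on $[0,1/2]$ and $\lambda(1-x)$ on $[1/2,1]$, with critical point $c=1/2$. $\Omega=\{0,1,C\}$. The address of $x$ is $0$ if $x<c$, $C$ if $x=c$, $1$ if $x>c$; the itinerary $\mathcal I(x)$ is the sequence of addresses of $x,T(x),T^2(x),\dots$; $\mathcal I^+(x)=\lim_{y\downarrow x}\mathcal I(y)$ (limit in the product topology on $\Omega^{\mathbb N}$). The kneading sequence is $K=\sigma(\mathcal I^+(c))$, $\sigma$ the shift. A word is finite string over $\Omega$; it is even if it contains an even number of $1$'s and odd otherwise. $\mathbf s|_k$ denotes the first $k$ symbols. Parity lexicographic order: set $0<C<1$; for two sequences (or two words of equal length) $\mathbf s\ne\mathbf t$ with first difference at index $k$ (i.e. $s_i=t_i$ for $i<k$, $s_k\ne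 t_k$), $\mathbf s\prec\mathbf t$ iff either $s_0\dots s_{k-1}$ is even and $s_k<t_k$, or $s_0\dots s_{k-1}$ is odd and $s_k>t_k$; $\succ$ is the reverse relation. *)

theory Defs
  imports Complex_Main
begin

datatype sym = S0 | SC | S1

fun rank :: "sym \<Rightarrow> nat" where
  "rank S0 = 0" | "rank SC = 1" | "rank S1 = 2"

definition tent :: "real \<Rightarrow> real \<Rightarrow> real" where
  "tent lam x = (if x \<le> 1/2 then lam * x else lam * (1 - x))"

definition crit :: real where "crit = 1/2"

definition addr :: "real \<Rightarrow> sym" where
  "addr x = (if x < crit then S0 else if x = crit then SC else S1)"

definition itin :: "real \<Rightarrow> real \<Rightarrow> nat \<Rightarrow> sym" where
  "itin lam x n = addr ((tent lam ^^ n) x)"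

text \<open>I^+(x) = lim_{y -> x+} I(y) in the product topology on sequences over a finite alphabet:
  each coordinate is eventually constant as y tends to x from the right.\<close>
definition itin_plus :: "real \<Rightarrow> real \<Rightarrow> nat \<Rightarrow> sym" where
  "itin_plus lam x = (THE s. \<forall>n. eventually (\<lambda>y. itin lam y n = s n) (at_right x))"

definition kneading :: "real \<Rightarrow> nat \<Rightarrow> sym" where
  "kneading lam = (\<lambda>n. itin_plus lam crit (Suc n))"

definition num_ones :: "sym list \<Rightarrow> nat" where
  "num_ones w = length (filter (\<lambda>a. a = S1) w)"

definition even_word :: "sym list \<Rightarrow> bool" where
  "even_word w \<longleftrightarrow> even (num_ones w)"

definition plex_less :: "(nat \<Rightarrow> sym) \<Rightarrow> (nat \<Rightarrow> sym) \<Rightarrow> bool" where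
  "plex_less s t \<longleftrightarrow> (\<exists>k. (\<forall>i<k. s i = t i) \<and> s k \<noteq> t k \<and>
     (if even_word (map s [0..<k]) then rank (s k) < rank (t k) else rank (s k) > rank (t k)))"

definition plex_less_word :: "sym list \<Rightarrow> sym list \<Rightarrow> bool" where
  "plex_less_word u v \<longleftrightarrow> length u = length v \<and> (\<exists>k < length u. take k u = take k v \<and> u ! k \<noteq> v ! k \<and>
     (if even_word (take k u) then rank (u ! k) < rank (v ! k) else rank (u ! k) > rank (v ! k)))"

definition shift :: "(nat \<Rightarrow> sym) \<Rightarrow> nat \<Rightarrow> nat \<Rightarrow> sym" where
  "shift t k = (\<lambda>n. t (n + k))"

definition prefix_seq :: "(nat \<Rightarrow> sym) \<Rightarrow> nat \<Rightarrow> sym list" where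
  "prefix_seq s j = map s [0..<j]"

definition crit_period :: "real \<Rightarrow> nat \<Rightarrow> bool" where
  "crit_period lam m \<longleftrightarrow> m > 0 \<and> (tent lam ^^ m) crit = crit \<and>
     (\<forall>k. 0 < k \<and> k < m \<longrightarrow> (tent lam ^^ k) crit \<noteq> crit)"

end

theory Submission
  imports Defs
begin

definition pcv :: "real \<Rightarrow> nat \<Rightarrow> real \<Rightarrow> sym" where
  "pcv lam n s = (if (tent lam ^^ n) crit < crit then S0 else if (tent lam ^^ n) crit > crit then S1
                  else if s > 0 then S1 else S0)"

primrec sg :: "real \<Rightarrow> nat \<Rightarrow> real" where
  "sg lam 0 = 1"
| "sg lam (Suc n) = (if pcv lam n (sg lam n) = S1 then - sg lam n else sg lam n)"

definition pc :: "real \<Rightarrow> nat \<Rightarrow> sym" where "pc lam n = pcv lam n (sg lam n)"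

lemma sg_pm: "sg lam n = 1 \<or> sg lam n = -1"
  by (induction n) auto

lemma pc_01: "pc lam n \<noteq> SC" by (simp add: pc_def pcv_def)

lemma num_ones_append[simp]: "num_ones (xs @ ys) = num_ones xs + num_ones ys"
  by (simp add: num_ones_def)
lemma num_ones_simps[simp]: "num_ones [] = 0"
  "num_ones (x # xs) = (if x = S1 then Suc (num_ones xs) else num_ones xs)"
  by (simp_all add: num_ones_def)

lemma sg_pow: "sg lam n = (-1) ^ num_ones (map (pc lam) [0..<n])"
  by (induction n) (auto simp: pc_def)

lemma tent_le: "x \<le> crit \<Longrightarrow> tent lam x = lam * x"
  by (simp add: tent_def crit_def)
lemma tent_ge: "x \<ge> crit \<Longrightarrow> tent lam x = lam * (1 - x)"
  by (auto simp: tent_def crit_def)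

lemma local_affine:
  assumes lam: "0 < lam"
  shows "\<exists>\<epsilon>>0. \<forall>y. crit < y \<and> y < crit + \<epsilon> \<longrightarrow>
     (tent lam ^^ n) y = (tent lam ^^ n) crit + sg lam n * lam ^ n * (y - crit)
     \<and> addr ((tent lam ^^ n) y) = pc lam n"
proof (induction n)
  case 0
  show ?case by (rule exI[of _ 1]) (auto simp: addr_def pc_def pcv_def)
next
  case (Suc n)
  then obtain \<epsilon> where \<epsilon>: "\<epsilon>>0" and H: "\<And>y. crit<y \<Longrightarrow> y<crit+\<epsilon> \<Longrightarrow>
     (tent lam ^^ n) y = (tent lam ^^ n) crit + sg lam n * lam ^ n * (y - crit)
     \<and> addr ((tent lam ^^ n) y) = pc lam n" by blast
  define z0 where "z0 = (tent lam ^^ n) crit"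
  have aff: "(tent lam ^^ Suc n) y = (tent lam ^^ Suc n) crit + sg lam (Suc n) * lam^Suc n * (y - crit)"
    if y: "crit<y" "y<crit+\<epsilon>" for y
  proof -
    have e1: "(tent lam ^^ n) y = z0 + sg lam n * lam^n*(y-crit)"
      and e2: "addr ((tent lam ^^ n) y) = pc lam n" using H[OF y] z0_def by auto
    consider "pc lam n = S0" | "pc lam n = S1" using pc_01 by (cases "pc lam n") auto
    then show ?thesis
    proof cases
      case 1
      then have a: "(tent lam ^^ n) y \<le> crit" using e2 by (auto simp: addr_def split: if_splits)
      have b: "z0 \<le> crit" using 1 by (auto simp: pc_def pcv_def z0_def split: if_splits)
      have s: "sg lam (Suc n) = sg lam n" using 1 by (simp add: pc_def)
      have f1: "(tent lam ^^ Suc n) y = lam * ((tent lam ^^ n) y)" using a by (simp add: tent_le)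
      have f2: "(tent lam ^^ Suc n) crit = lam * z0" using b by (simp add: tent_le z0_def)
      show ?thesis unfolding f1 f2 e1 s by (simp add: algebra_simps)
    next
      case 2
      then have a: "(tent lam ^^ n) y \<ge> crit" using e2 by (auto simp: addr_def split: if_splits)
      have b: "z0 \<ge> crit" using 2 by (auto simp: pc_def pcv_def z0_def split: if_splits)
      have s: "sg lam (Suc n) = - sg lam n" using 2 by (simp add: pc_def)
      have f1: "(tent lam ^^ Suc n) y = lam * (1 - (tent lam ^^ n) y)" using a by (simp add: tent_ge)
      have f2: "(tent lam ^^ Suc n) crit = lam * (1 - z0)" using b by (simp add: tent_ge z0_def)
      show ?thesis unfolding f1 f2 e1 s by (simp add: algebra_simps)
    qed
  qed
  define z1 where "z1 = (tent lam ^^ Suc n) crit"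
  have lp: "lam ^ Suc n > 0" using lam by simp
  show ?case
  proof (cases "z1 = crit")
    case True
    show ?thesis
    proof (rule exI[of _ \<epsilon>], intro conjI allI impI)
      fix y assume y: "crit < y \<and> y < crit + \<epsilon>"
      show "(tent lam ^^ Suc n) y = (tent lam ^^ Suc n) crit + sg lam (Suc n) * lam ^ Suc n * (y - crit)"
        using aff y by blast
      define P where "P = lam ^ Suc n * (y - crit)"
      have pos: "P > 0" using lp y by (simp add: P_def)
      have v: "(tent lam ^^ Suc n) y = crit + sg lam (Suc n) * P"
        using aff[of y] y True unfolding P_def z1_def by (simp del: sg.simps funpow.simps)
      have pcv: "pc lam (Suc n) = (if sg lam (Suc n) > 0 then S1 else S0)"
        using True by (simp add: pc_def pcv_def z1_def del: sg.simps funpow.simps)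
      from sg_pm[of lam "Suc n"] show "addr ((tent lam ^^ Suc n) y) = pc lam (Suc n)"
      proof
        assume s: "sg lam (Suc n) = 1"
        have "(tent lam ^^ Suc n) y > crit" using v pos unfolding s by simp
        then show ?thesis using pcv s by (simp add: addr_def del: sg.simps funpow.simps)
      next
        assume s: "sg lam (Suc n) = -1"
        have "(tent lam ^^ Suc n) y < crit" using v pos unfolding s by simp
        then show ?thesis using pcv s by (simp add: addr_def del: sg.simps funpow.simps)
      qed
    qed (use \<epsilon> in auto)
  next
    case False
    define \<delta> where "\<delta> = min \<epsilon> (\<bar>z1 - crit\<bar> / lam ^ Suc n)"
    have \<delta>: "\<delta> > 0" using \<epsilon> False lp by (simp add: \<delta>_def)
    show ?thesis
    proof (rule exI[of _ \<delta>], intro conjI allI impI)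
      fix y assume y: "crit < y \<and> y < crit + \<delta>"
      then have y1: "crit < y" "y < crit + \<epsilon>" by (auto simp: \<delta>_def)
      have ee: "(tent lam ^^ Suc n) y = z1 + sg lam (Suc n) * lam ^ Suc n * (y - crit)"
        using aff[OF y1] z1_def by simp
      then show "(tent lam ^^ Suc n) y = (tent lam ^^ Suc n) crit + sg lam (Suc n) * lam ^ Suc n * (y - crit)"
        using z1_def by simp
      have "y - crit < \<bar>z1 - crit\<bar> / lam ^ Suc n" using y by (auto simp: \<delta>_def)
      then have small: "lam ^ Suc n * (y - crit) < \<bar>z1 - crit\<bar>" using lp
        by (simp add: pos_less_divide_eq mult.commute)
      have pos: "lam ^ Suc n * (y - crit) > 0" using lp y by simp
      have pcv: "pc lam (Suc n) = (if z1 < crit then S0 else S1)"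
        using False by (auto simp: pc_def pcv_def z1_def simp del: sg.simps funpow.simps)
      from sg_pm[of lam "Suc n"] show "addr ((tent lam ^^ Suc n) y) = pc lam (Suc n)"
      proof
        assume "sg lam (Suc n) = 1"
        then show ?thesis using ee small pos pcv False
          by (cases "z1 < crit") (auto simp: addr_def simp del: sg.simps funpow.simps)
      next
        assume "sg lam (Suc n) = -1"
        then show ?thesis using ee small pos pcv False
          by (cases "z1 < crit") (auto simp: addr_def simp del: sg.simps funpow.simps)
      qed
    qed (use \<delta> in auto)
  qed
qed

lemma eventually_pc: "0<lam \<Longrightarrow> eventually (\<lambda>y. itin lam y n = pc lam n) (at_right crit)"
proof -
  assume "0 < lam"
  from local_affine[OF this, of n] obtain \<epsilon> where e: "\<epsilon>>0" and
    H: "\<forall>y. crit < y \<and> y < crit + \<epsilon> \<longrightarrow> addr ((tent lam ^^ n) y) = pc lam n" by blast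
  have "eventually (\<lambda>y. y \<in> {crit<..<crit+\<epsilon>}) (at_right crit)"
    by (rule eventually_at_right_real) (use e in simp)
  then show ?thesis by (rule eventually_mono) (use H in \<open>auto simp: itin_def\<close>)
qed

lemma itin_plus_crit: "0<lam \<Longrightarrow> itin_plus lam crit = pc lam"
  unfolding itin_plus_def
proof (rule the_equality)
  assume l: "0<lam"
  show "\<forall>n. eventually (\<lambda>y. itin lam y n = pc lam n) (at_right crit)" using eventually_pc[OF l] by blast
  fix s assume A: "\<forall>n. eventually (\<lambda>y. itin lam y n = s n) (at_right crit)"
  show "s = pc lam"
  proof
    fix n
    have "eventually (\<lambda>y. itin lam y n = s n \<and> itin lam y n = pc lam n) (at_right crit)"
      using A eventually_pc[OF l] eventually_conj by blast
    then have "eventually (\<lambda>y. s n = pc lam n) (at_right crit)" by (rule eventually_mono) auto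
    then show "s n = pc lam n" by (simp add: eventually_const_iff)
  qed
qed

lemma kneading_eq: "0<lam \<Longrightarrow> kneading lam n = pc lam (Suc n)"
  by (simp add: kneading_def itin_plus_crit)


lemma funpow_period: "(f ^^ m) x = x \<Longrightarrow> (f ^^ (n + m)) x = (f ^^ n) x"
  by (simp add: funpow_add)

lemma sg_period:
  assumes per: "(tent lam ^^ m) crit = crit"
  shows "sg lam (Suc n + m) = sg lam (Suc n)"
proof (induction n)
  case 0
  have s1: "sg lam 1 = -1" by (simp add: pcv_def)
  have "pcv lam m s = (if s > 0 then S1 else S0)" for s using per by (simp add: pcv_def)
  then have "sg lam (Suc m) = -1" using sg_pm[of lam m] by auto
  then show ?case using s1 by simp
next
  case (Suc n)
  have "pcv lam (Suc n + m) s = pcv lam (Suc n) s" for s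
    using funpow_period[OF per, of "Suc n"] by (simp add: pcv_def)
  then show ?case using Suc by simp
qed

lemma pc_period:
  assumes per: "(tent lam ^^ m) crit = crit"
  shows "pc lam (Suc n + m) = pc lam (Suc n)"
  using sg_period[OF per, of n] funpow_period[OF per, of "Suc n"]
  by (simp add: pc_def pcv_def del: sg.simps funpow.simps)

lemma num_pc_Suc: "num_ones (map (pc lam) [0..<Suc k]) = Suc (num_ones (map (\<lambda>i. pc lam (Suc i)) [0..<k]))"
proof -
  have "pc lam 0 = S1" by (simp add: pc_def pcv_def)
  then show ?thesis by (simp only: map_upt_Suc) simp
qed

lemma sg_Suc_pos: "sg lam (Suc k) > 0 \<longleftrightarrow> odd (num_ones (map (\<lambda>i. pc lam (Suc i)) [0..<k]))"
  unfolding sg_pow num_pc_Suc by (simp add: neg_one_even_power neg_one_odd_power)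

context
  fixes lam :: real and m :: nat
  assumes lam: "0 < lam" and per: "(tent lam ^^ m) crit = crit" and mpos: "m > 0"
begin

lemma K_period: "kneading lam (n + m) = kneading lam n"
  using pc_period[OF per, of n] by (simp add: kneading_eq[OF lam])

lemma K_01: "kneading lam n \<noteq> SC"
  by (simp add: kneading_eq[OF lam] pc_01)

lemma prefK: "prefix_seq (kneading lam) k = map (\<lambda>i. pc lam (Suc i)) [0..<k]"
  by (simp add: prefix_seq_def kneading_eq[OF lam])

lemma K_even: "even (num_ones (prefix_seq (kneading lam) m))"
proof -
  have "sg lam (Suc 0 + m) = sg lam (Suc 0)" by (rule sg_period[OF per])
  then have "\<not> sg lam (Suc m) > 0" by (simp add: pcv_def)
  then show ?thesis using sg_Suc_pos[of lam m] by (simp add: prefK)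
qed

lemma K_side:
  "(tent lam ^^ Suc k) crit < crit \<Longrightarrow> kneading lam k = S0"
  "(tent lam ^^ Suc k) crit > crit \<Longrightarrow> kneading lam k = S1"
  "(tent lam ^^ Suc k) crit = crit \<Longrightarrow> (kneading lam k = S1 \<longleftrightarrow> odd (num_ones (prefix_seq (kneading lam) k)))"
  using sg_Suc_pos[of lam k]
  by (auto simp: kneading_eq[OF lam] pc_def pcv_def prefK simp del: sg.simps funpow.simps)

end

definition badAt :: "(nat\<Rightarrow>sym) \<Rightarrow> (nat\<Rightarrow>sym) \<Rightarrow> nat \<Rightarrow> nat \<Rightarrow> bool" where
 "badAt K f i d \<longleftrightarrow> (\<forall>e<d. f (i+e) = K e) \<and> f (i+d) \<noteq> K d \<and>
    (if even_word (map K [0..<d]) then rank (K d) < rank (f (i+d)) else rank (f (i+d)) < rank (K d))"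

lemma badAt_reduce:
  assumes per: "\<And>n. K (n + m) = K n" and ev: "even (num_ones (map K [0..<m]))" and m: "m > 0"
  shows "badAt K f i d \<Longrightarrow> \<exists>i' d'. d' < m \<and> i'+d' = i+d \<and> badAt K f i' d'"
proof (induction d arbitrary: i rule: less_induct)
  case (less d)
  show ?case
  proof (cases "d < m")
    case True then show ?thesis using less.prems by blast
  next
    case False
    have spl: "map K [0..<d] = map K [0..<m] @ map K [0..<d-m]"
    proof -
      have "[0..<d] = [0..<m] @ [m..<d]" using False
        by (metis le_0_eq linorder_not_less upt_add_eq_append zero_le add_diff_inverse_nat)
      moreover have "map K [m..<d] = map K [0..<d-m]"
      proof -
        have "[m..<d] = map (\<lambda>i. i + m) [0..<d-m]" using False by (simp add: map_add_upt)
        then show ?thesis using per by simp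
      qed
      ultimately show ?thesis by simp
    qed
    have par: "even_word (map K [0..<d]) = even_word (map K [0..<d-m])"
      using ev by (simp add: even_word_def spl)
    have Kd: "K (d - m) = K d" using per[of "d-m"] False by simp
    have "badAt K f (i+m) (d-m)"
      using less.prems unfolding badAt_def
    proof (intro conjI)
      assume b: "(\<forall>e<d. f (i + e) = K e) \<and> f (i + d) \<noteq> K d \<and> (if even_word (map K [0..<d]) then rank (K d) < rank (f (i + d)) else rank (f (i + d)) < rank (K d))"
      show "\<forall>e<d - m. f (i + m + e) = K e"
      proof (intro allI impI)
        fix e assume "e < d - m"
        then have "f (i + (e + m)) = K (e+m)" using b by auto
        then show "f (i + m + e) = K e" using per by (simp add: add.commute add.left_commute)
      qed
      have fi: "f (i + m + (d - m)) = f (i + d)" using False by simp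
      show "f (i + m + (d - m)) \<noteq> K (d - m)" using b fi Kd by simp
      show "if even_word (map K [0..<d - m]) then rank (K (d - m)) < rank (f (i + m + (d - m))) else rank (f (i + m + (d - m))) < rank (K (d - m))"
        using b fi Kd par by simp
    qed
    then obtain i' d' where "d' < m" "i' + d' = i + m + (d - m)" "badAt K f i' d'"
      using less.IH[of "d-m" "i+m"] m False by auto
    then show ?thesis using False by auto
  qed
qed


lemma plw_intro:
  assumes len: "length v = Suc d"
    and eq: "\<forall>e<d. v ! e = K e" and ne: "v ! d \<noteq> K d"
    and par: "if even_word (map K [0..<d]) then rank (K d) < rank (v ! d) else rank (v ! d) < rank (K d)"
  shows "plex_less_word (prefix_seq K (Suc d)) v"
  unfolding plex_less_word_def
proof (intro conjI exI[of _ d])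
  show "length (prefix_seq K (Suc d)) = length v" using len by (simp add: prefix_seq_def)
  show "d < length (prefix_seq K (Suc d))" by (simp add: prefix_seq_def)
  have tk: "take d (prefix_seq K (Suc d)) = map K [0..<d]" by (simp add: prefix_seq_def take_map)
  show "take d (prefix_seq K (Suc d)) = take d v"
    unfolding tk by (rule nth_equalityI) (use len eq in auto)
  have pd: "prefix_seq K (Suc d) ! d = K d" by (simp add: prefix_seq_def del: upt_Suc)
  show "prefix_seq K (Suc d) ! d \<noteq> v ! d" using ne pd by simp
  show "if even_word (take d (prefix_seq K (Suc d))) then rank (prefix_seq K (Suc d) ! d) < rank (v ! d)
        else rank (v ! d) < rank (prefix_seq K (Suc d) ! d)" using par unfolding tk pd .
qed

lemma badAt_word: "badAt K (\<lambda>j. s!j) i d \<Longrightarrow> i + d < length s \<Longrightarrow>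
   plex_less_word (prefix_seq K (Suc d)) (take (Suc d) (drop i s))"
  by (rule plw_intro) (auto simp: badAt_def)

lemma badAt_seq: "badAt K t i d \<Longrightarrow> plex_less_word (prefix_seq K (Suc d)) (prefix_seq (shift t i) (Suc d))"
  by (rule plw_intro) (auto simp: badAt_def prefix_seq_def shift_def add.commute simp del: upt_Suc)

lemma badAt_transfer: "badAt K f i d \<Longrightarrow> (\<forall>j \<le> i+d. f j = g j) \<Longrightarrow> badAt K g i d"
  unfolding badAt_def by auto


definition eok :: "real \<Rightarrow> sym list \<Rightarrow> nat \<Rightarrow> bool \<Rightarrow> bool" where
 "eok lam w k left \<longleftrightarrow> k \<le> length w \<and> drop (length w - k) w = prefix_seq (kneading lam) k \<and>
    (odd (num_ones (prefix_seq (kneading lam) k)) \<longleftrightarrow> left)"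

definition Inv :: "real \<Rightarrow> sym list \<Rightarrow> real \<Rightarrow> real \<Rightarrow> bool" where
 "Inv lam w l r \<longleftrightarrow> l < r \<and> (l = 0 \<or> (\<exists>k. l = (tent lam ^^ Suc k) crit \<and> eok lam w k True))
   \<and> (\<exists>k. r = (tent lam ^^ Suc k) crit \<and> eok lam w k False)
   \<and> (\<forall>y. l < y \<and> y < r \<longrightarrow> (\<exists>x\<in>{0..tent lam crit}. prefix_seq (itin lam x) (length w) = w
         \<and> (tent lam ^^ length w) x = y))"

lemma eok0: "eok lam w 0 False"
  by (simp add: eok_def prefix_seq_def)

lemma eok_ext: "eok lam w k left \<Longrightarrow> kneading lam k = a \<Longrightarrow>
   eok lam (w@[a]) (Suc k) (if a = S1 then \<not>left else left)"
  unfolding eok_def by (auto simp: prefix_seq_def Suc_diff_le)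

lemma eok_bad: "eok lam w k left \<Longrightarrow> a \<noteq> kneading lam k \<Longrightarrow>
   (left \<longrightarrow> rank a < rank (kneading lam k)) \<Longrightarrow> (\<not>left \<longrightarrow> rank (kneading lam k) < rank a) \<Longrightarrow>
   badAt (kneading lam) (\<lambda>j. (w@[a])!j) (length w - k) k"
  unfolding badAt_def
proof (intro conjI)
  assume e: "eok lam w k left" and ne: "a \<noteq> kneading lam k" and
    l1: "left \<longrightarrow> rank a < rank (kneading lam k)" and l2: "\<not>left \<longrightarrow> rank (kneading lam k) < rank a"
  have kl: "k \<le> length w" and dr: "drop (length w - k) w = prefix_seq (kneading lam) k"
    and pr: "odd (num_ones (prefix_seq (kneading lam) k)) \<longleftrightarrow> left" using e by (auto simp: eok_def)
  show "\<forall>e<k. (w @ [a]) ! (length w - k + e) = kneading lam e"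
  proof (intro allI impI)
    fix e assume "e < k"
    then have idx: "length w - k + e < length w" using kl by arith
    then have "(w @ [a]) ! (length w - k + e) = drop (length w - k) w ! e" using kl by (simp add: nth_append)
    also have "\<dots> = kneading lam e" using dr \<open>e<k\<close> by (simp add: prefix_seq_def)
    finally show "(w @ [a]) ! (length w - k + e) = kneading lam e" .
  qed
  have la: "(w @ [a]) ! (length w - k + k) = a" using kl by simp
  show "(w @ [a]) ! (length w - k + k) \<noteq> kneading lam k" using la ne by simp
  show "if even_word (map (kneading lam) [0..<k]) then rank (kneading lam k) < rank ((w @ [a]) ! (length w - k + k))
    else rank ((w @ [a]) ! (length w - k + k)) < rank (kneading lam k)"
    using la l1 l2 pr by (auto simp: even_word_def prefix_seq_def)
qed

lemma crit_pos: "crit > 0" by (simp add: crit_def)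

context
  fixes lam :: real and m :: nat
  assumes lam: "0 < lam" and per: "(tent lam ^^ m) crit = crit" and mpos: "m > 0"
begin

lemma left_side: "eok lam w k True \<Longrightarrow> (tent lam ^^ Suc k) crit \<ge> crit \<Longrightarrow> kneading lam k = S1"
  using K_side[OF lam per mpos, of k] by (cases "(tent lam ^^ Suc k) crit = crit") (auto simp: eok_def)

lemma left_side0: "(tent lam ^^ Suc k) crit < crit \<Longrightarrow> kneading lam k = S0"
  using K_side[OF lam per mpos, of k] by auto

lemma right_side: "eok lam w k False \<Longrightarrow> (tent lam ^^ Suc k) crit \<le> crit \<Longrightarrow> kneading lam k = S0"
  using K_side[OF lam per mpos, of k] K_01[OF lam per mpos, of k]
  by (cases "(tent lam ^^ Suc k) crit = crit"; cases "kneading lam k") (auto simp: eok_def)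

lemma right_side1: "(tent lam ^^ Suc k) crit > crit \<Longrightarrow> kneading lam k = S1"
  using K_side[OF lam per mpos, of k] by auto

lemma Inv_init: "Inv lam [] 0 (tent lam crit)"
  unfolding Inv_def
proof (intro conjI)
  show "0 < tent lam crit" using lam by (simp add: tent_def crit_def)
  show "\<exists>k. tent lam crit = (tent lam ^^ Suc k) crit \<and> eok lam [] k False"
    by (rule exI[of _ 0]) (simp add: eok0)
  show "\<forall>y. 0 < y \<and> y < tent lam crit \<longrightarrow> (\<exists>x\<in>{0..tent lam crit}. prefix_seq (itin lam x) (length []) = [] \<and> (tent lam ^^ length []) x = y)"
    by (auto simp: prefix_seq_def)
qed simp

lemma prefix_snoc: "prefix_seq f (Suc n) = prefix_seq f n @ [f n]"
  by (simp add: prefix_seq_def)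

lemma step0_ok:
  assumes I: "Inv lam w l r" and lc: "l < crit"
  shows "Inv lam (w@[S0]) (tent lam l) (tent lam (min r crit))"
proof -
  from I have lr: "l < r" and L: "l = 0 \<or> (\<exists>k. l = (tent lam ^^ Suc k) crit \<and> eok lam w k True)"
    and R: "\<exists>k. r = (tent lam ^^ Suc k) crit \<and> eok lam w k False"
    and Y: "\<forall>y. l < y \<and> y < r \<longrightarrow> (\<exists>x\<in>{0..tent lam crit}. prefix_seq (itin lam x) (length w) = w
         \<and> (tent lam ^^ length w) x = y)" unfolding Inv_def by blast+
  have mn: "min r crit \<le> crit" by simp
  have t1: "tent lam l = lam * l" using lc by (simp add: tent_le)
  have t2: "tent lam (min r crit) = lam * min r crit" using mn by (rule tent_le)
  have lt: "l < min r crit" using lr lc by simp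
  show ?thesis unfolding Inv_def
  proof (intro conjI)
    show "tent lam l < tent lam (min r crit)" unfolding t1 t2 using lt lam by simp
    show "tent lam l = 0 \<or> (\<exists>k. tent lam l = (tent lam ^^ Suc k) crit \<and> eok lam (w @ [S0]) k True)"
      using L
    proof
      assume "l = 0" then show ?thesis using t1 by simp
    next
      assume "\<exists>k. l = (tent lam ^^ Suc k) crit \<and> eok lam w k True"
      then obtain k where k: "l = (tent lam ^^ Suc k) crit" "eok lam w k True" by blast
      have "kneading lam k = S0" using left_side0 k(1) lc by simp
      from eok_ext[OF k(2) this] have "eok lam (w@[S0]) (Suc k) True" by simp
      then show ?thesis using k(1) by (intro disjI2 exI[of _ "Suc k"]) simp
    qed
    show "\<exists>k. tent lam (min r crit) = (tent lam ^^ Suc k) crit \<and> eok lam (w @ [S0]) k False"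
    proof (cases "r \<le> crit")
      case True
      from R obtain k where k: "r = (tent lam ^^ Suc k) crit" "eok lam w k False" by blast
      have "kneading lam k = S0" using right_side k True by simp
      from eok_ext[OF k(2) this] have "eok lam (w@[S0]) (Suc k) False" by simp
      then show ?thesis using k(1) True by (intro exI[of _ "Suc k"]) simp
    next
      case False
      then show ?thesis by (intro exI[of _ 0]) (simp add: eok0)
    qed
    show "\<forall>y. tent lam l < y \<and> y < tent lam (min r crit) \<longrightarrow>
      (\<exists>x\<in>{0..tent lam crit}. prefix_seq (itin lam x) (length (w @ [S0])) = w @ [S0] \<and> (tent lam ^^ length (w @ [S0])) x = y)"
    proof (intro allI impI)
      fix y' assume y': "tent lam l < y' \<and> y' < tent lam (min r crit)"
      define y where "y = y' / lam"
      have yy: "y' = lam * y" using lam by (simp add: y_def)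
      have ly: "l < y" "y < min r crit" using y' lam unfolding t1 t2 yy by auto
      then obtain x where x: "x\<in>{0..tent lam crit}" "prefix_seq (itin lam x) (length w) = w"
         "(tent lam ^^ length w) x = y" using Y by auto
      have yc: "y < crit" using ly by simp
      have "itin lam x (length w) = S0" using x(3) yc by (simp add: itin_def addr_def)
      moreover have "(tent lam ^^ Suc (length w)) x = y'" using x(3) yc yy by (simp add: tent_le)
      ultimately show "\<exists>x\<in>{0..tent lam crit}. prefix_seq (itin lam x) (length (w @ [S0])) = w @ [S0] \<and> (tent lam ^^ length (w @ [S0])) x = y'"
        using x by (intro bexI[of _ x]) (simp_all add: prefix_snoc)
    qed
  qed
qed

lemma step1_ok:
  assumes I: "Inv lam w l r" and rc: "crit < r"
  shows "Inv lam (w@[S1]) (tent lam r) (tent lam (max l crit))"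
proof -
  from I have lr: "l < r" and L: "l = 0 \<or> (\<exists>k. l = (tent lam ^^ Suc k) crit \<and> eok lam w k True)"
    and R: "\<exists>k. r = (tent lam ^^ Suc k) crit \<and> eok lam w k False"
    and Y: "\<forall>y. l < y \<and> y < r \<longrightarrow> (\<exists>x\<in>{0..tent lam crit}. prefix_seq (itin lam x) (length w) = w
         \<and> (tent lam ^^ length w) x = y)" unfolding Inv_def by blast+
  have mx: "max l crit \<ge> crit" by simp
  have t1: "tent lam r = lam * (1 - r)" using rc by (simp add: tent_ge)
  have t2: "tent lam (max l crit) = lam * (1 - max l crit)" using mx by (rule tent_ge)
  have lt: "max l crit < r" using lr rc by simp
  show ?thesis unfolding Inv_def
  proof (intro conjI)
    show "tent lam r < tent lam (max l crit)" unfolding t1 t2 using lt lam by simp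
    show "tent lam r = 0 \<or> (\<exists>k. tent lam r = (tent lam ^^ Suc k) crit \<and> eok lam (w @ [S1]) k True)"
    proof -
      from R obtain k where k: "r = (tent lam ^^ Suc k) crit" "eok lam w k False" by blast
      have "kneading lam k = S1" using right_side1 k rc by simp
      from eok_ext[OF k(2) this] have "eok lam (w@[S1]) (Suc k) True" by simp
      then show ?thesis using k(1) by (intro disjI2 exI[of _ "Suc k"]) simp
    qed
    show "\<exists>k. tent lam (max l crit) = (tent lam ^^ Suc k) crit \<and> eok lam (w @ [S1]) k False"
    proof (cases "l \<ge> crit")
      case True
      then have "l \<noteq> 0" using crit_pos by auto
      then obtain k where k: "l = (tent lam ^^ Suc k) crit" "eok lam w k True" using L by blast
      have "kneading lam k = S1" using left_side k True by simp
      from eok_ext[OF k(2) this] have "eok lam (w@[S1]) (Suc k) False" by simp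
      then show ?thesis using k(1) True by (intro exI[of _ "Suc k"]) simp
    next
      case False
      then show ?thesis by (intro exI[of _ 0]) (simp add: eok0)
    qed
    show "\<forall>y. tent lam r < y \<and> y < tent lam (max l crit) \<longrightarrow>
      (\<exists>x\<in>{0..tent lam crit}. prefix_seq (itin lam x) (length (w @ [S1])) = w @ [S1] \<and> (tent lam ^^ length (w @ [S1])) x = y)"
    proof (intro allI impI)
      fix y' assume y': "tent lam r < y' \<and> y' < tent lam (max l crit)"
      define y where "y = 1 - y' / lam"
      have yy: "y' = lam * (1 - y)" using lam by (simp add: y_def)
      have ly: "max l crit < y" "y < r" using y' lam unfolding t1 t2 yy by auto
      then obtain x where x: "x\<in>{0..tent lam crit}" "prefix_seq (itin lam x) (length w) = w"
         "(tent lam ^^ length w) x = y" using Y by auto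
      have yc: "y > crit" using ly by simp
      have "itin lam x (length w) = S1" using x(3) yc by (simp add: itin_def addr_def)
      moreover have "(tent lam ^^ Suc (length w)) x = y'" using x(3) yc yy by (simp add: tent_ge)
      ultimately show "\<exists>x\<in>{0..tent lam crit}. prefix_seq (itin lam x) (length (w @ [S1])) = w @ [S1] \<and> (tent lam ^^ length (w @ [S1])) x = y'"
        using x by (intro bexI[of _ x]) (simp_all add: prefix_snoc)
    qed
  qed
qed

lemma step_bad0:
  assumes I: "Inv lam w l r" and lc: "l \<ge> crit"
  shows "\<exists>i d. i + d \<le> length w \<and> badAt (kneading lam) (\<lambda>j. (w@[S0])!j) i d"
proof -
  have "l \<noteq> 0" using lc crit_pos by auto
  then obtain k where k: "l = (tent lam ^^ Suc k) crit" "eok lam w k True" using I unfolding Inv_def by blast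
  have K: "kneading lam k = S1" using left_side k lc by simp
  have "badAt (kneading lam) (\<lambda>j. (w@[S0])!j) (length w - k) k" by (rule eok_bad[OF k(2)]) (simp_all add: K)
  moreover have "length w - k + k \<le> length w" using k(2) by (simp add: eok_def)
  ultimately show ?thesis by blast
qed

lemma step_bad1:
  assumes I: "Inv lam w l r" and rc: "r \<le> crit"
  shows "\<exists>i d. i + d \<le> length w \<and> badAt (kneading lam) (\<lambda>j. (w@[S1])!j) i d"
proof -
  obtain k where k: "r = (tent lam ^^ Suc k) crit" "eok lam w k False" using I unfolding Inv_def by blast
  have K: "kneading lam k = S0" using right_side k rc by simp
  have "badAt (kneading lam) (\<lambda>j. (w@[S1])!j) (length w - k) k" by (rule eok_bad[OF k(2)]) (simp_all add: K)
  moreover have "length w - k + k \<le> length w" using k(2) by (simp add: eok_def)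
  ultimately show ?thesis by blast
qed

lemma step:
  assumes I: "Inv lam w l r" and a: "a \<in> {S0, S1}"
  shows "(\<exists>l' r'. Inv lam (w@[a]) l' r') \<or> (\<exists>i d. i + d \<le> length w \<and> badAt (kneading lam) (\<lambda>j. (w@[a])!j) i d)"
proof (cases "a = S0")
  case True
  then show ?thesis using step0_ok[OF I] step_bad0[OF I] by (cases "l < crit") auto
next
  case False
  then have "a = S1" using a by auto
  then show ?thesis using step1_ok[OF I] step_bad1[OF I] by (cases "crit < r") auto
qed

lemma part1_aux:
  assumes s: "set s \<subseteq> {S0, S1}"
  shows "n \<le> length s \<Longrightarrow> (\<exists>l r. Inv lam (take n s) l r) \<or> (\<exists>i d. i + d < n \<and> badAt (kneading lam) (\<lambda>j. s!j) i d)"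
proof (induction n)
  case 0
  then show ?case using Inv_init by auto
next
  case (Suc n)
  then have nl: "n < length s" by simp
  have tk: "take (Suc n) s = take n s @ [s!n]" using nl by (simp add: take_Suc_conv_app_nth)
  have a: "s ! n \<in> {S0, S1}" using s nl nth_mem by blast
  from Suc.IH[OF less_imp_le[OF nl]] show ?case
  proof (elim disjE exE conjE)
    fix i d assume "i + d < n" "badAt (kneading lam) (\<lambda>j. s!j) i d"
    then show ?thesis by auto
  next
    fix l r assume I: "Inv lam (take n s) l r"
    from step[OF I a] show ?thesis
    proof (elim disjE exE conjE)
      fix l' r' assume "Inv lam (take n s @ [s ! n]) l' r'" then show ?thesis using tk by auto
    next
      fix i d assume id: "i + d \<le> length (take n s)" and b: "badAt (kneading lam) (\<lambda>j. (take n s @ [s ! n]) ! j) i d"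
      have "\<forall>j \<le> i + d. (take n s @ [s ! n]) ! j = s ! j"
      proof (intro allI impI)
        fix j assume "j \<le> i + d"
        then have "j < n \<or> j = n" using id by auto
        then show "(take n s @ [s ! n]) ! j = s ! j" using nl by (auto simp: nth_append)
      qed
      from badAt_transfer[OF b this] have "badAt (kneading lam) (\<lambda>j. s!j) i d" .
      then show ?thesis using id nl by (intro disjI2 exI[of _ i] exI[of _ d]) auto
    qed
  qed
qed

end


theorem mainTheorem4:
  fixes lam :: real and m :: nat
  assumes "1 < lam" and "lam < 2"
    and "crit_period lam m" and "m \<ge> 3"
  shows "(\<forall>(N::nat) (s::sym list). length s = N \<and> set s \<subseteq> {S0, S1} \<and>
            (\<forall>x \<in> {0..tent lam crit}. prefix_seq (itin lam x) N \<noteq> s) \<longrightarrow>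
            (\<exists>i j. i + j \<le> N \<and> j \<le> m \<and>
               plex_less_word (prefix_seq (kneading lam) j) (take j (drop i s))))
      \<and> (\<forall>t::nat \<Rightarrow> sym. (\<forall>n. t n \<in> {S0, S1}) \<and> (\<exists>k. plex_less (kneading lam) (shift t k)) \<longrightarrow>
            (\<exists>i j. j \<le> m \<and>
               plex_less_word (prefix_seq (kneading lam) j) (prefix_seq (shift t i) j)))"
proof -
  have lam: "0 < lam" using assms(1) by simp
  have per: "(tent lam ^^ m) crit = crit" and mpos: "m > 0" using assms(3) by (auto simp: crit_period_def)
  define K where "K = kneading lam"
  have perK: "\<And>n. K (n + m) = K n" unfolding K_def by (rule K_period[OF lam per mpos])
  have evK: "even (num_ones (map K [0..<m]))" using K_even[OF lam per mpos] by (simp add: K_def prefix_seq_def)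
  note red = badAt_reduce[OF perK evK mpos]
  show ?thesis
  proof (intro conjI allI impI)
    fix N s assume A: "length s = N \<and> set s \<subseteq> {S0, S1} \<and> (\<forall>x \<in> {0..tent lam crit}. prefix_seq (itin lam x) N \<noteq> s)"
    then have sl: "length s = N" and ss: "set s \<subseteq> {S0, S1}"
      and nr: "\<forall>x \<in> {0..tent lam crit}. prefix_seq (itin lam x) N \<noteq> s" by auto
    from part1_aux[OF lam per mpos ss, of N] sl have "(\<exists>l r. Inv lam (take N s) l r) \<or> (\<exists>i d. i + d < N \<and> badAt (kneading lam) ((!) s) i d)" by simp
    then
    show "\<exists>i j. i + j \<le> N \<and> j \<le> m \<and> plex_less_word (prefix_seq (kneading lam) j) (take j (drop i s))"
    proof (elim disjE exE conjE)
      fix l r assume I: "Inv lam (take N s) l r"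
      then have I': "Inv lam s l r" using sl by simp
      then have lr: "l < r" and Y: "\<forall>y. l < y \<and> y < r \<longrightarrow> (\<exists>x\<in>{0..tent lam crit}. prefix_seq (itin lam x) (length s) = s
         \<and> (tent lam ^^ length s) x = y)" unfolding Inv_def by blast+
      then obtain x where "x\<in>{0..tent lam crit}" "prefix_seq (itin lam x) N = s"
        using Y[rule_format, of "(l+r)/2"] lr sl by auto
      then show ?thesis using nr by blast
    next
      fix i d assume id: "i + d < N" and b: "badAt (kneading lam) ((!) s) i d"
      from red[OF b[folded K_def]] obtain i' d' where d': "d' < m" "i' + d' = i + d" "badAt K ((!) s) i' d'" by blast
      have "plex_less_word (prefix_seq K (Suc d')) (take (Suc d') (drop i' s))"
        by (rule badAt_word[OF d'(3)]) (use id d' sl in simp)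
      then show ?thesis using id d' unfolding K_def by (intro exI[of _ i'] exI[of _ "Suc d'"]) simp
    qed
  next
    fix t :: "nat \<Rightarrow> sym" assume A: "(\<forall>n. t n \<in> {S0, S1}) \<and> (\<exists>k. plex_less (kneading lam) (shift t k))"
    then obtain k where "plex_less K (shift t k)" unfolding K_def by blast
    then obtain d where d: "\<forall>i<d. K i = t (i + k)" "K d \<noteq> t (d + k)"
      "if even_word (map K [0..<d]) then rank (K d) < rank (t (d + k)) else rank (K d) > rank (t (d + k))"
      unfolding plex_less_def shift_def by blast
    have "badAt K t k d" unfolding badAt_def using d by (auto simp: add.commute)
    from red[OF this] obtain i' d' where d': "d' < m" "badAt K t i' d'" by blast
    show "\<exists>i j. j \<le> m \<and> plex_less_word (prefix_seq (kneading lam) j) (prefix_seq (shift t i) j)"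
      using badAt_seq[OF d'(2)] d'(1) unfolding K_def by (intro exI[of _ i'] exI[of _ "Suc d'"]) simp
  qed
qed

end
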